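(* Let $T^2=\mathbb{R}^2/\mathbb{Z}^2$, let $H:T^2\to\mathrm{Sym}_3(\mathbb{R})$ be continuous with $H(-k)=H(k)$ for all $k\in T^2$, and let $i\in\{1,2,3\}$ be such that the $i$-th eigenvalue $E_i(k)$ (eigenvalues ordered $E_1(k)\le E_2(k)\le E_3(k)$) is a simple eigenvalue of $H(k)$ for every $k\in T^2$. Then the real line bundle $L_i=\{(k,v)\in T^2\times\mathbb{R}^3: H(k)v=E_i(k)v\}$ over $T^2$ is trivial; equivalently, there is a continuous map $u:T^2\to\mathbb{R}^3$ with $\|u(k)\|=1$ and $H(k)u(k)=E_i(k)u(k)$ for all $k$. *)

theory Defs
  imports "HOL-Analysis.Analysis"
begin

text \<open>The torus T^2 = R^2/Z^2 is modelled by Z^2-periodic maps on real^2.\<close>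

definition zlattice_periodic :: "(real^2 \<Rightarrow> 'b) \<Rightarrow> bool" where
  "zlattice_periodic f \<longleftrightarrow> (\<forall>k d. (\<forall>j. d $ j \<in> \<int>) \<longrightarrow> f (k + d) = f k)"

definition sorted_eigenvalues :: "real^3^3 \<Rightarrow> real list" where
  "sorted_eigenvalues A = (THE l. length l = 3 \<and> sorted l \<and>
      (\<forall>x. det (x *\<^sub>R mat 1 - A) = prod_list (map (\<lambda>e. x - e) l)))"

definition ith_eigenvalue :: "real^3^3 \<Rightarrow> nat \<Rightarrow> real" where
  "ith_eigenvalue A i = sorted_eigenvalues A ! (i - 1)"

definition ith_eigenvalue_simple :: "real^3^3 \<Rightarrow> nat \<Rightarrow> bool" where
  "ith_eigenvalue_simple A i \<longleftrightarrow> count_list (sorted_eigenvalues A) (ith_eigenvalue A i) = 1"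

end

theory Submission
  imports Defs
begin

definition nx :: "3 \<Rightarrow> 3" where "nx i = (if i = 1 then 2 else if i = 2 then 3 else 1)"
definition tr3 :: "'a::comm_ring_1^3^3 \<Rightarrow> 'a" where "tr3 A = A$1$1 + A$2$2 + A$3$3"
definition m3 :: "'a::comm_ring_1^3^3 \<Rightarrow> 'a" where "m3 A = A$1$1*A$2$2 - A$1$2*A$2$1 + A$1$1*A$3$3 - A$1$3*A$3$1 + A$2$2*A$3$3 - A$2$3*A$3$2"
definition cp :: "'a::comm_ring_1^3^3 \<Rightarrow> 'a \<Rightarrow> 'a" where "cp A x = x^3 - tr3 A * x^2 + m3 A * x - det A"
definition adjm :: "'a::comm_ring_1^3^3 \<Rightarrow> 'a^3^3" where
 "adjm M = (\<chi> i j. M$(nx j)$(nx i) * M$(nx (nx j))$(nx (nx i)) - M$(nx j)$(nx (nx i)) * M$(nx (nx j))$(nx i))"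
definition scm :: "'a::comm_ring_1 \<Rightarrow> 'a^3^3" where "scm x = (\<chi> i j. if i = j then x else 0)"

lemma nx_simps[simp]: "nx 1 = 2" "nx 2 = 3" "nx 3 = 1" by (simp_all add: nx_def)

lemma adj_trace: "tr3 (adjm (scm x - A)) = 3*x^2 - 2 * tr3 A * x + m3 A"
  by (simp add: tr3_def m3_def adjm_def scm_def algebra_simps power2_eq_square)

lemma cp_det: "det (scm x - A) = cp A x"
  unfolding cp_def tr3_def m3_def det_3 scm_def by (simp add: algebra_simps power2_eq_square power3_eq_cube)

lemma sym_entries: "transpose M = M \<Longrightarrow> M$2$1 = M$1$2 \<and> M$3$1 = M$1$3 \<and> M$3$2 = M$2$3"
  by (metis transpose_def vec_lambda_beta)

lemma adj_transpose: "transpose M = M \<Longrightarrow> transpose (adjm M) = adjm M"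
  apply (drule sym_entries)
  by (simp add: vec_eq_iff transpose_def adjm_def forall_3)

lemma adj_mult: "(M ** adjm M) $ i $ j = (if i = j then det M else 0)"
proof -
  have "\<forall>i j. (M ** adjm M) $ i $ j = (if i = j then det M else 0)"
    unfolding forall_3 matrix_matrix_mult_def sum_3 adjm_def det_3 vec_lambda_beta nx_simps
    by (simp add: algebra_simps)
  then show ?thesis by blast
qed
lemma adj_minor_gen:
  fixes M :: "'a::comm_ring_1^3^3"
  shows "\<exists>c. adjm M $ j $ m * adjm M $ m $ l - adjm M $ j $ l * adjm M $ m $ m = det M * c"
proof -
  have "\<forall>j m l. \<exists>c. adjm M $ j $ m * adjm M $ m $ l - adjm M $ j $ l * adjm M $ m $ m = det M * c"
    unfolding forall_3 adjm_def det_3 vec_lambda_beta nx_simps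
    apply (intro conjI)
    apply (rule exI[where x="0"], simp add: algebra_simps)
    apply (rule exI[where x="0"], simp add: algebra_simps)
    apply (rule exI[where x="0"], simp add: algebra_simps)
    apply (rule exI[where x="- M$3$3"], simp add: algebra_simps)
    apply (rule exI[where x="0"], simp add: algebra_simps)
    apply (rule exI[where x="M$1$3"], simp add: algebra_simps)
    apply (rule exI[where x="- M$2$2"], simp add: algebra_simps)
    apply (rule exI[where x="M$1$2"], simp add: algebra_simps)
    apply (rule exI[where x="0"], simp add: algebra_simps)
    apply (rule exI[where x="0"], simp add: algebra_simps)
    apply (rule exI[where x="- M$3$3"], simp add: algebra_simps)
    apply (rule exI[where x="M$2$3"], simp add: algebra_simps)
    apply (rule exI[where x="0"], simp add: algebra_simps)
    apply (rule exI[where x="0"], simp add: algebra_simps)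
    apply (rule exI[where x="0"], simp add: algebra_simps)
    apply (rule exI[where x="M$2$1"], simp add: algebra_simps)
    apply (rule exI[where x="- M$1$1"], simp add: algebra_simps)
    apply (rule exI[where x="0"], simp add: algebra_simps)
    apply (rule exI[where x="0"], simp add: algebra_simps)
    apply (rule exI[where x="M$3$2"], simp add: algebra_simps)
    apply (rule exI[where x="- M$2$2"], simp add: algebra_simps)
    apply (rule exI[where x="M$3$1"], simp add: algebra_simps)
    apply (rule exI[where x="0"], simp add: algebra_simps)
    apply (rule exI[where x="- M$1$1"], simp add: algebra_simps)
    apply (rule exI[where x="0"], simp add: algebra_simps)
    apply (rule exI[where x="0"], simp add: algebra_simps)
    apply (rule exI[where x="0"], simp add: algebra_simps)
    done
  then show ?thesis by blast
qed

lemma adj_minor: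
  fixes M :: "'a::comm_ring_1^3^3"
  assumes "det M = 0"
  shows "adjm M $ j $ m * adjm M $ m $ l = adjm M $ j $ l * adjm M $ m $ m"
  using adj_minor_gen[of M j m l] assms by (auto simp: right_minus_eq)

definition cmat :: "real^3^3 \<Rightarrow> complex^3^3" where "cmat A = (\<chi> i j. complex_of_real (A$i$j))"

lemma det_cmat: "det (cmat A) = complex_of_real (det A)"
  unfolding det_3 cmat_def by simp
lemma tr3_cmat: "tr3 (cmat A) = complex_of_real (tr3 A)"
  unfolding tr3_def cmat_def by simp
lemma m3_cmat: "m3 (cmat A) = complex_of_real (m3 A)"
  unfolding m3_def cmat_def by simp

lemma scm_mult_vec: "scm c *v x = c *s x"
  by (simp add: vec_eq_iff matrix_vector_mult_def scm_def sum_3 forall_3)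

lemma prod_cmat:
  fixes a b :: real and A :: "real^3^3"
  defines "z \<equiv> Complex a b"
  defines "S \<equiv> A - scm a"
  shows "(scm z - cmat A) ** (scm (cnj z) - cmat A) = cmat (S ** S + scm (b^2))"
proof -
  have "\<forall>i j. ((scm z - cmat A) ** (scm (cnj z) - cmat A)) $ i $ j = cmat (S ** S + scm (b^2)) $ i $ j"
    unfolding forall_3 matrix_matrix_mult_def sum_3 cmat_def scm_def S_def z_def vec_lambda_beta
       vector_add_component vector_minus_component
    by (simp add: complex_eq_iff algebra_simps power2_eq_square)
  then show ?thesis by (simp add: vec_eq_iff)
qed
lemma posdef_det:
  fixes A :: "real^3^3" and a b :: real
  assumes sym: "transpose A = A" and b: "b \<noteq> 0"
  defines "S \<equiv> A - scm a"
  shows "det (S ** S + scm (b^2)) \<noteq> 0"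
proof -
  let ?T = "S ** S + scm (b^2)"
  have sA: "A$j$i = A$i$j" for i j
  proof -
    have "transpose A $ i $ j = A $ i $ j" using sym by simp
    then show ?thesis by (simp add: transpose_def)
  qed
  have symS: "transpose S = S"
    unfolding S_def by (simp add: vec_eq_iff transpose_def scm_def sA)
  have ker: "x = 0" if "?T *v x = 0" for x
  proof -
    have "?T *v x = S *v (S *v x) + b^2 *s x"
      by (simp only: matrix_vector_mult_add_rdistrib matrix_vector_mul_assoc scm_mult_vec)
    then have "S *v (S *v x) + b^2 *\<^sub>R x = 0"
      using that by (simp add: scalar_mult_eq_scaleR)
    then have "inner x (S *v (S *v x) + b^2 *\<^sub>R x) = 0" by simp
    then have "0 = inner x (S *v (S *v x)) + b^2 * inner x x"
      by (simp add: inner_add_right)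
    also have "inner x (S *v (S *v x)) = inner (S *v x) (S *v x)"
    proof -
      have "x v* S = S *v x" using vector_transpose_matrix[of x S] symS by simp
      then show ?thesis using dot_lmul_matrix[of x S "S *v x"] by simp
    qed
    finally have "0 = inner (S *v x) (S *v x) + b^2 * inner x x" .
    moreover have "inner (S *v x) (S *v x) \<ge> 0" by simp
    moreover have "b^2 > 0" using b by simp
    moreover have "inner x x \<ge> 0" by simp
    ultimately have "b^2 * inner x x = 0"
      using mult_nonneg_nonneg[of "b^2" "inner x x"] by linarith
    then show "x = 0" using b by simp
  qed
  have "inj ((*v) ?T)"
  proof (rule injI)
    fix x y assume "?T *v x = ?T *v y"
    then have "?T *v (x - y) = 0" by (simp add: matrix_vector_mult_diff_distrib)
    then have "x - y = 0" by (rule ker)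
    then show "x = y" by simp
  qed
  then show ?thesis
    using det_nz_iff_inj[of "(*v) ?T"] by (simp add: matrix_vector_mul_linear)
qed
lemma no_complex_root:
  fixes A :: "real^3^3" and a b :: real
  assumes sym: "transpose A = A" and b: "b \<noteq> 0"
  shows "(Complex a b)^3 - of_real (tr3 A) * (Complex a b)^2 + of_real (m3 A) * Complex a b - of_real (det A) \<noteq> 0"
proof -
  let ?z = "Complex a b"
  have "cp (cmat A) ?z * cp (cmat A) (cnj ?z) = det ((scm ?z - cmat A) ** (scm (cnj ?z) - cmat A))"
    by (simp add: det_mul cp_det)
  also have "\<dots> = of_real (det ((A - scm a) ** (A - scm a) + scm (b^2)))"
    by (simp add: prod_cmat det_cmat)
  finally have "cp (cmat A) ?z \<noteq> 0"
    using posdef_det[OF sym b, of a] by auto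
  then show ?thesis by (simp add: cp_def tr3_cmat m3_cmat det_cmat)
qed

lemma cubic_root_exists: "\<exists>r::real. r^3 - c2*r^2 + c1*r - c0 = 0"
proof -
  define B where "B = 1 + \<bar>c2\<bar> + \<bar>c1\<bar> + \<bar>c0\<bar>"
  let ?q = "\<lambda>x::real. x^3 - c2*x^2 + c1*x - c0"
  have B1: "B \<ge> 1" unfolding B_def by simp
  have B2: "B^2 \<ge> B" using B1 by (simp add: power2_eq_square)
  have h1: "c2 * B^2 \<le> \<bar>c2\<bar> * B^2" by (simp add: mult_right_mono)
  have h2: "\<bar>c1 * B\<bar> \<le> \<bar>c1\<bar> * B^2" using B1 B2 by (simp add: abs_mult mult_left_mono)
  have h3: "\<bar>c0\<bar> \<le> \<bar>c0\<bar> * B^2" using B1 B2 by (simp add: mult_le_cancel_left1)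
  have h4: "-c2 * B^2 \<le> \<bar>c2\<bar> * B^2" using mult_right_mono[of "-c2" "\<bar>c2\<bar>" "B^2"] by simp
  have e1: "B^3 = B^2 * (1 + \<bar>c2\<bar> + \<bar>c1\<bar> + \<bar>c0\<bar>)" unfolding B_def by (simp add: power2_eq_square power3_eq_cube)
  have "?q (-B) \<le> 0"
  proof -
    have "?q (-B) = -(B^3) - c2 * B^2 - c1 * B - c0" by (simp add: power2_eq_square power3_eq_cube)
    also have "\<dots> \<le> -(B^3) + \<bar>c2\<bar> * B^2 + \<bar>c1\<bar> * B^2 + \<bar>c0\<bar> * B^2"
      using h4 h2 h3 abs_ge_minus_self[of "c1*B"] abs_ge_minus_self[of c0] by linarith
    also have "\<dots> = -(B^2)" using e1 by (simp add: algebra_simps)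
    finally show ?thesis using zero_le_power2[of B] by linarith
  qed
  moreover have "?q B \<ge> 0"
  proof -
    have "?q B \<ge> B^3 - \<bar>c2\<bar> * B^2 - \<bar>c1\<bar> * B^2 - \<bar>c0\<bar> * B^2"
      using h1 h2 h3 abs_ge_minus_self[of "c1*B"] abs_ge_self[of c0] by linarith
    also have "B^3 - \<bar>c2\<bar> * B^2 - \<bar>c1\<bar> * B^2 - \<bar>c0\<bar> * B^2 = B^2" using e1 by (simp add: algebra_simps)
    finally show ?thesis using zero_le_power2[of B] by linarith
  qed
  moreover have "-B \<le> B" using B1 by simp
  moreover have "continuous_on {-B..B} ?q" by (intro continuous_intros)
  ultimately obtain x where "?q x = 0" using IVT'[of ?q "-B" 0 B] by blast
  then show ?thesis by blast
qed

lemma cubic_split: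
  fixes c2 c1 c0 :: real
  assumes nc: "\<And>a b. b \<noteq> 0 \<Longrightarrow> (Complex a b)^3 - of_real c2 * (Complex a b)^2 + of_real c1 * Complex a b - of_real c0 \<noteq> 0"
  shows "\<exists>r1 r2 r3. \<forall>x::real. x^3 - c2*x^2 + c1*x - c0 = (x-r1)*(x-r2)*(x-r3)"
proof -
  obtain r where r: "r^3 - c2*r^2 + c1*r - c0 = 0" using cubic_root_exists by blast
  define \<beta> where "\<beta> = r - c2"
  define \<gamma> where "\<gamma> = c1 + r * \<beta>"
  have c0: "c0 = r^3 - c2*r^2 + c1*r" using r by simp
  have fact: "x^3 - c2*x^2 + c1*x - c0 = (x - r) * (x^2 + \<beta>*x + \<gamma>)" for x :: real
    unfolding c0 \<beta>_def \<gamma>_def by (simp add: algebra_simps power2_eq_square power3_eq_cube)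
  have cfact: "z^3 - of_real c2*z^2 + of_real c1*z - of_real c0 = (z - of_real r) * (z^2 + of_real \<beta>*z + of_real \<gamma>)" for z :: complex
    unfolding c0 \<beta>_def \<gamma>_def by (simp add: algebra_simps power2_eq_square power3_eq_cube)
  define D where "D = \<beta>^2 - 4*\<gamma>"
  show ?thesis
  proof (cases "D \<ge> 0")
    case True
    define s1 where "s1 = (-\<beta> + sqrt D)/2"
    define s2 where "s2 = (-\<beta> - sqrt D)/2"
    have sq: "sqrt D * sqrt D = D" using True by simp
    have "x^2 + \<beta>*x + \<gamma> = (x - s1) * (x - s2)" for x
    proof -
      have "(x - s1) * (x - s2) = x^2 + \<beta>*x + (\<beta>^2 - sqrt D * sqrt D)/4"
        unfolding s1_def s2_def by (simp add: algebra_simps power2_eq_square add_divide_distrib diff_divide_distrib)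
      moreover have "(\<beta>^2 - sqrt D * sqrt D)/4 = \<gamma>" by (simp only: sq) (simp add: D_def)
      ultimately show ?thesis by simp
    qed
    then show ?thesis using fact by (metis mult.assoc)
  next
    case False
    define a where "a = -\<beta>/2"
    define b where "b = sqrt (-D)/2"
    have b0: "b \<noteq> 0" using False unfolding b_def by simp
    have sq: "sqrt (-D) * sqrt (-D) = -D" using False by simp
    have bb: "b*b = -D/4" unfolding b_def using sq by simp
    have "(Complex a b)^2 + of_real \<beta> * Complex a b + of_real \<gamma> = 0"
      by (simp add: complex_eq_iff power2_eq_square a_def bb D_def algebra_simps) (simp add: field_simps)
    then have "(Complex a b)^3 - of_real c2 * (Complex a b)^2 + of_real c1 * Complex a b - of_real c0 = 0"
      using cfact by simp
    with nc[OF b0] show ?thesis by blast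
  qed
qed

lemma prod3_unique:
  fixes r1 r2 r3 t1 t2 t3 :: real
  assumes o: "r1 \<le> r2" "r2 \<le> r3" "t1 \<le> t2" "t2 \<le> t3"
    and eq: "\<And>x. (x-r1)*(x-r2)*(x-r3) = (x-t1)*(x-t2)*(x-t3)"
  shows "r1 = t1 \<and> r2 = t2 \<and> r3 = t3"
proof -
  have rin: "r = t1 \<or> r = t2 \<or> r = t3" if "r = r1 \<or> r = r2 \<or> r = r3" for r
  proof -
    have "(r-t1)*(r-t2)*(r-t3) = 0" using eq[of r] that by auto
    then show ?thesis by auto
  qed
  have sin: "w = r1 \<or> w = r2 \<or> w = r3" if "w = t1 \<or> w = t2 \<or> w = t3" for w
  proof -
    have "(w-r1)*(w-r2)*(w-r3) = 0" using eq[of w] that by auto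
    then show ?thesis by auto
  qed
  have 1: "r1 = t1" using rin[of r1] sin[of t1] o by auto
  have 3: "r3 = t3" using rin[of r3] sin[of t3] o by auto
  have e0: "r1*r2*r3 = t1*t2*t3" using eq[of 0] by simp
  have e1: "(1-r1)*(1-r2)*(1-r3) = (1-t1)*(1-t2)*(1-t3)" using eq[of 1] by simp
  have e2: "(-1-r1)*(-1-r2)*(-1-r3) = (-1-t1)*(-1-t2)*(-1-t3)" using eq[of "-1"] by simp
  have "r1 + r2 + r3 = t1 + t2 + t3"
  proof -
    have A: "(1-r1)*(1-r2)*(1-r3) + (-1-r1)*(-1-r2)*(-1-r3) = -2*(r1+r2+r3) - 2*(r1*r2*r3)"
      by (simp add: algebra_simps)
    have B: "(1-t1)*(1-t2)*(1-t3) + (-1-t1)*(-1-t2)*(-1-t3) = -2*(t1+t2+t3) - 2*(t1*t2*t3)"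
      by (simp add: algebra_simps)
    have "-2*(r1+r2+r3) - 2*(r1*r2*r3) = -2*(t1+t2+t3) - 2*(t1*t2*t3)"
      using A B e1 e2 by metis
    then show ?thesis using e0 by simp
  qed
  then show ?thesis using 1 3 by simp
qed

lemma len3: "length l = 3 \<Longrightarrow> \<exists>a b c. l = [a,b,c]"
  by (metis length_0_conv length_Suc_conv numeral_3_eq_3)

lemma prod_list_sort:
  fixes f :: "'a::linorder \<Rightarrow> 'b::comm_monoid_mult"
  shows "prod_list (map f (sort xs)) = prod_list (map f xs)"
proof -
  have "prod_list (map f (sort xs)) = prod_mset (mset (map f (sort xs)))" by (simp only: prod_mset_prod_list)
  also have "\<dots> = prod_mset (mset (map f xs))" by (simp only: mset_map mset_sort)
  also have "\<dots> = prod_list (map f xs)" by (simp only: prod_mset_prod_list)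
  finally show ?thesis .
qed

lemma smat_scm: "x *\<^sub>R mat 1 = scm (x::real)"
  by (simp add: vec_eq_iff mat_def scm_def)

lemma se_exists:
  fixes A :: "real^3^3"
  assumes sym: "transpose A = A"
  shows "\<exists>l. length l = 3 \<and> sorted l \<and> (\<forall>x. det (x *\<^sub>R mat 1 - A) = prod_list (map (\<lambda>e. x - e) l))"
proof -
  obtain r1 r2 r3 where r: "\<And>x. x^3 - tr3 A*x^2 + m3 A*x - det A = (x-r1)*(x-r2)*(x-r3)"
    using cubic_split[of "tr3 A" "m3 A" "det A"] no_complex_root[OF sym] by blast
  let ?l = "sort [r1,r2,r3]"
  have "det (x *\<^sub>R mat 1 - A) = prod_list (map (\<lambda>e. x - e) ?l)" for x
  proof -
    have "det (x *\<^sub>R mat 1 - A) = cp A x" by (simp add: smat_scm cp_det)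
    also have "\<dots> = (x-r1)*(x-r2)*(x-r3)" using r by (simp add: cp_def)
    also have "\<dots> = prod_list (map (\<lambda>e. x - e) [r1,r2,r3])" by simp
    finally show ?thesis by (simp only: prod_list_sort)
  qed
  then show ?thesis by (intro exI[of _ ?l]) auto
qed

lemma se_unique:
  assumes "length l = 3" "sorted l" "\<forall>x. det (x *\<^sub>R mat 1 - A) = prod_list (map (\<lambda>e. x - e) l)"
    and "length l' = 3" "sorted l'" "\<forall>x. det (x *\<^sub>R mat 1 - A) = prod_list (map (\<lambda>e. x - e) l')"
  shows "l = l'"
proof -
  obtain a b c where l: "l = [a,b,c]" using len3 assms(1) by blast
  obtain a' b' c' where l': "l' = [a',b',c']" using len3 assms(4) by blast
  have "\<And>x. (x-a)*(x-b)*(x-c) = (x-a')*(x-b')*(x-c')"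
    using assms(3,6) unfolding l l' by (simp add: mult.assoc)
  moreover have "a \<le> b" "b \<le> c" "a' \<le> b'" "b' \<le> c'" using assms(2,5) unfolding l l' by auto
  ultimately show ?thesis using prod3_unique[of a b c a' b' c'] l l' by simp
qed

lemma se_char:
  fixes A :: "real^3^3"
  assumes sym: "transpose A = A"
  shows "\<exists>a b c. sorted_eigenvalues A = [a,b,c] \<and> a \<le> b \<and> b \<le> c \<and> (\<forall>x. cp A x = (x-a)*(x-b)*(x-c))"
proof -
  let ?P = "\<lambda>l. length l = 3 \<and> sorted l \<and> (\<forall>x. det (x *\<^sub>R mat 1 - A) = prod_list (map (\<lambda>e. x - e) l))"
  have ex: "\<exists>!l. ?P l" using se_exists[OF sym] se_unique by blast
  have "?P (sorted_eigenvalues A)" unfolding sorted_eigenvalues_def using theI'[OF ex] .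
  then obtain a b c where l: "sorted_eigenvalues A = [a,b,c]" and "sorted [a,b,c]"
    and d: "\<forall>x. det (x *\<^sub>R mat 1 - A) = prod_list (map (\<lambda>e. x - e) [a,b,c])"
    using len3 by metis
  moreover have "\<forall>x. cp A x = (x-a)*(x-b)*(x-c)"
    using d by (simp add: smat_scm cp_det mult.assoc)
  ultimately show ?thesis by auto
qed

definition outer :: "real^3 \<Rightarrow> real^3^3" where "outer v = (\<chi> i j. v$i * v$j)"

lemma rank_one:
  fixes C :: "real^3^3"
  assumes symC: "transpose C = C"
    and minors: "\<And>j m l. C$j$m * C$m$l = C$j$l * C$m$m"
    and t: "tr3 C \<noteq> 0"
  shows "\<exists>v. norm v = 1 \<and> outer v = (1 / tr3 C) *\<^sub>R C"
proof -
  define t where "t = tr3 C"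
  define D where "D i j = C$i$j / t" for i j
  have Csym: "C$j$i = C$i$j" for i j
  proof -
    have "transpose C $ i $ j = C $ i $ j" using symC by simp
    then show ?thesis by (simp add: transpose_def)
  qed
  have Dsym: "D j i = D i j" for i j unfolding D_def using Csym by simp
  have Dmin: "D j m * D m l = D j l * D m m" for j m l
    unfolding D_def using minors[of j m l] by (simp add: divide_simps)
  have diag: "D j j * D m m \<ge> 0" for j m
  proof -
    have "D j j * D m m = D j m * D j m" using Dmin[of j m j] Dsym[of m j] by simp
    then show ?thesis by simp
  qed
  have tr: "D 1 1 + D 2 2 + D 3 3 = 1"
    using t unfolding D_def t_def tr3_def by (simp add: add_divide_distrib[symmetric])
  obtain m where m: "D m m > 0"
  proof (rule ccontr)
    assume "\<not> thesis"
    then have "D k k \<le> 0" for k using that by (meson not_le)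
    then show False using tr by (smt (verit))
  qed
  define v where "v = (\<chi> j. D j m / sqrt (D m m))"
  have vv: "v$i * v$j = D i j" for i j
  proof -
    have "v$i * v$j = D i m * D j m / (sqrt (D m m) * sqrt (D m m))" unfolding v_def by simp
    also have "\<dots> = D i m * D m j / D m m" using m Dsym[of m j] by simp
    also have "\<dots> = D i j" using Dmin[of i m j] m by simp
    finally show ?thesis .
  qed
  have "inner v v = 1"
    unfolding inner_vec_def sum_3 using vv[of 1 1] vv[of 2 2] vv[of 3 3] tr by simp
  then have "norm v = 1" by (simp add: norm_eq_1)
  moreover have "outer v = (1 / tr3 C) *\<^sub>R C"
    by (simp add: vec_eq_iff outer_def vv D_def t_def)
  ultimately show ?thesis by blast
qed

lemma outer_mult: "outer u *v w = inner u w *\<^sub>R u"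
  by (simp add: vec_eq_iff outer_def matrix_vector_mult_def inner_vec_def sum_distrib_left mult.commute mult.left_commute)

lemma eig_from_proj:
  fixes A :: "real^3^3"
  assumes "norm u = 1" and "A ** outer u = l *\<^sub>R outer u"
  shows "A *v u = l *\<^sub>R u"
proof -
  have "inner u u = 1" using assms(1) norm_eq_1 by blast
  then have uu: "outer u *v u = u" by (simp add: outer_mult)
  have "A *v u = A *v (outer u *v u)" using uu by simp
  also have "\<dots> = (A ** outer u) *v u" by (simp add: matrix_vector_mul_assoc)
  also have "\<dots> = l *\<^sub>R (outer u *v u)" using assms(2) by (simp add: scaleR_matrix_vector_assoc)
  finally show ?thesis using uu by simp
qed

lemma adj_eig:
  fixes A :: "real^3^3"
  assumes "cp A l = 0"
  shows "A ** adjm (scm l - A) = l *\<^sub>R adjm (scm l - A)"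
proof -
  let ?M = "scm l - A"
  let ?C = "adjm ?M"
  have d: "det ?M = 0" using assms cp_det by metis
  have e: "(?M ** ?C) $ i $ j = l * ?C$i$j - (A ** ?C)$i$j" for i j
  proof -
    have "\<forall>i j. (?M ** ?C) $ i $ j = l * ?C$i$j - (A ** ?C)$i$j"
      unfolding forall_3 matrix_matrix_mult_def sum_3 vec_lambda_beta scm_def vector_minus_component
      by (simp add: algebra_simps)
    then show ?thesis by blast
  qed
  show ?thesis
  proof (simp add: vec_eq_iff, intro allI)
    fix i j
    show "(A ** ?C) $ i $ j = l * ?C $ i $ j" using e[of i j] adj_mult[of ?M i j] d by (simp split: if_splits)
  qed
qed


definition proj :: "real^3^3 \<Rightarrow> nat \<Rightarrow> real^3^3" where
  "proj A i = (1 / tr3 (adjm (scm (ith_eigenvalue A i) - A))) *\<^sub>R adjm (scm (ith_eigenvalue A i) - A)"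

lemma coeffs:
  fixes A :: "real^3^3"
  assumes "\<forall>x. cp A x = (x-a)*(x-b)*(x-c)"
  shows "tr3 A = a+b+c \<and> m3 A = a*b+a*c+b*c"
proof -
  have e0: "det A = a*b*c" using assms[rule_format, of 0] by (simp add: cp_def)
  have e1: "1 - tr3 A + m3 A - det A = 1 - (a+b+c) + (a*b+a*c+b*c) - a*b*c"
    using assms[rule_format, of 1] by (simp add: cp_def algebra_simps)
  have e2: "-1 - tr3 A - m3 A - det A = -1 - (a+b+c) - (a*b+a*c+b*c) - a*b*c"
    using assms[rule_format, of "-1"] by (simp add: cp_def algebra_simps)
  show ?thesis using e0 e1 e2 by linarith
qed

lemma matrix_mult_scaleR_right: "(A::real^3^3) ** (s *\<^sub>R B) = s *\<^sub>R (A ** B)"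
  by (simp add: vec_eq_iff matrix_matrix_mult_def sum_distrib_left mult.left_commute)

lemma proj_props:
  fixes A :: "real^3^3"
  assumes sym: "transpose A = A" and i: "i \<in> {1,2,3}" and simple: "ith_eigenvalue_simple A i"
  shows "A ** proj A i = ith_eigenvalue A i *\<^sub>R proj A i"
    and "\<exists>v. norm v = 1 \<and> outer v = proj A i"
proof -
  obtain a b c where se: "sorted_eigenvalues A = [a,b,c]" and cpf: "\<forall>x. cp A x = (x-a)*(x-b)*(x-c)"
    using se_char[OF sym] by blast
  define l where "l = ith_eigenvalue A i"
  have cnt: "count_list [a,b,c] l = 1" using simple unfolding ith_eigenvalue_simple_def se l_def .
  have ls: "l = [a,b,c] ! (i - 1)" unfolding l_def ith_eigenvalue_def se ..
  have co: "tr3 A = a+b+c" "m3 A = a*b+a*c+b*c" using coeffs[OF cpf] by auto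
  define M where "M = scm l - A"
  define C where "C = adjm M"
  have tC: "tr3 C = 3*l^2 - 2*(a+b+c)*l + (a*b+a*c+b*c)"
    unfolding C_def M_def adj_trace co ..
  have cases: "(l = a \<and> b \<noteq> a \<and> c \<noteq> a) \<or> (l = b \<and> a \<noteq> b \<and> c \<noteq> b) \<or> (l = c \<and> a \<noteq> c \<and> b \<noteq> c)"
    using i ls cnt by (auto split: if_splits)
  have cp0: "cp A l = 0" using cases cpf by auto
  have t0: "tr3 C \<noteq> 0"
  proof -
    have "tr3 C = (l-a)*(l-b) + (l-a)*(l-c) + (l-b)*(l-c)" unfolding tC by (simp add: algebra_simps power2_eq_square)
    then show ?thesis using cases by auto
  qed
  have dM: "det M = 0" unfolding M_def using cp0 cp_det by metis
  have AC: "A ** C = l *\<^sub>R C" unfolding C_def M_def using adj_eig[OF cp0] .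
  have pr: "proj A i = (1 / tr3 C) *\<^sub>R C" unfolding proj_def C_def M_def l_def ..
  show "A ** proj A i = ith_eigenvalue A i *\<^sub>R proj A i"
    unfolding pr matrix_mult_scaleR_right AC l_def[symmetric] by simp
  have sA: "A$j$k = A$k$j" for j k
  proof -
    have "transpose A $ k $ j = A $ k $ j" using sym by simp
    then show ?thesis by (simp add: transpose_def)
  qed
  have symM: "transpose M = M" unfolding M_def by (simp add: vec_eq_iff transpose_def scm_def sA)
  have "\<exists>v. norm v = 1 \<and> outer v = (1 / tr3 C) *\<^sub>R C"
    using rank_one[of C] adj_transpose[OF symM] adj_minor[OF dM] t0 unfolding C_def by blast
  then show "\<exists>v. norm v = 1 \<and> outer v = proj A i" unfolding pr .
qed

lemma outer_neg[simp]: "outer (-w) = outer w"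
  by (simp add: outer_def)

lemma inner_outer: "inner (outer w *v v) v = (inner w v)^2"
  by (simp add: outer_mult power2_eq_square)

lemma outer_eq:
  assumes "norm w = 1" "norm w' = 1" "outer w = outer w'"
  shows "w' = w \<or> w' = -w"
proof -
  have ww: "inner w' w' = 1" using assms(2) norm_eq_1 by blast
  have "w' = outer w' *v w'" using ww by (simp add: outer_mult)
  also have "\<dots> = inner w w' *\<^sub>R w" by (simp only: assms(3)[symmetric] outer_mult)
  finally have e: "w' = inner w w' *\<^sub>R w" .
  then have "norm w' = \<bar>inner w w'\<bar> * norm w" by (metis norm_scaleR)
  then have "\<bar>inner w w'\<bar> = 1" using assms by simp
  then have "inner w w' = 1 \<or> inner w w' = -1" by linarith
  then show ?thesis using e by auto
qed

lemma cont_outer: "continuous_on S outer"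
  unfolding outer_def by (intro continuous_intros)

lemma cont_mv: "continuous_on S (\<lambda>Q::real^3^3. Q *v v)"
  unfolding matrix_vector_mult_def by (intro continuous_intros)

lemma sheet:
  fixes v0 :: "real^3" and s :: real
  assumes s: "s = 1 \<or> s = -1"
  defines "T \<equiv> {Q \<in> outer ` sphere 0 1. 0 < inner (Q *v v0) v0}"
  defines "U \<equiv> {w \<in> sphere 0 1. 0 < s * inner w v0}"
  shows "homeomorphism U T outer (\<lambda>Q. (s / norm (Q *v v0)) *\<^sub>R (Q *v v0))"
proof (rule homeomorphismI)
  have ss: "s * s = 1" using s by auto
  show "continuous_on U outer" by (rule cont_outer)
  have nz: "norm (Q *v v0) \<noteq> 0" if "Q \<in> T" for Q
    using that unfolding T_def by auto
  show "continuous_on T (\<lambda>Q. (s / norm (Q *v v0)) *\<^sub>R (Q *v v0))"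
    by (intro continuous_intros cont_mv) (use nz in auto)
  have bk: "(s / norm (outer w *v v0)) *\<^sub>R (outer w *v v0) = w" if "w \<in> U" for w
  proof -
    have w1: "norm w = 1" and pos: "0 < s * inner w v0" using that unfolding U_def by auto
    have "norm (outer w *v v0) = \<bar>inner w v0\<bar>" by (simp add: outer_mult w1)
    also have "\<dots> = s * inner w v0" using s pos by auto
    finally have "(s / norm (outer w *v v0)) *\<^sub>R (outer w *v v0) = (s / (s * inner w v0) * inner w v0) *\<^sub>R w"
      by (simp add: outer_mult)
    also have "s / (s * inner w v0) * inner w v0 = 1" using pos ss by (auto simp: field_simps)
    finally show ?thesis by simp
  qed
  then show "\<And>w. w \<in> U \<Longrightarrow> (s / norm (outer w *v v0)) *\<^sub>R (outer w *v v0) = w" .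
  show "outer ` U \<subseteq> T"
  proof
    fix Q assume "Q \<in> outer ` U"
    then obtain w where w: "w \<in> U" "Q = outer w" by blast
    have "inner w v0 \<noteq> 0" using w(1) unfolding U_def by auto
    then show "Q \<in> T" using w unfolding T_def U_def by (auto simp: inner_outer)
  qed
  have fw: "\<exists>w\<in>U. Q = outer w" if QT: "Q \<in> T" for Q
  proof -
    obtain w where w: "w \<in> sphere 0 1" "Q = outer w"
      using QT unfolding T_def by blast
    have "0 < inner (outer w *v v0) v0" using QT w unfolding T_def by simp
    then have nz: "inner w v0 \<noteq> 0" by (auto simp: inner_outer)
    show ?thesis
    proof (cases "0 < s * inner w v0")
      case True then show ?thesis using w unfolding U_def by auto
    next
      case False
      then have "0 < s * inner (-w) v0" using nz s by auto
      moreover have "-w \<in> sphere 0 1" using w by simp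
      ultimately show ?thesis using w unfolding U_def by (intro bexI[of _ "-w"]) auto
    qed
  qed
  show "(\<lambda>Q. (s / norm (Q *v v0)) *\<^sub>R (Q *v v0)) ` T \<subseteq> U"
  proof
    fix x assume "x \<in> (\<lambda>Q. (s / norm (Q *v v0)) *\<^sub>R (Q *v v0)) ` T"
    then obtain Q where Q: "Q \<in> T" "x = (s / norm (Q *v v0)) *\<^sub>R (Q *v v0)" by blast
    obtain w where "w \<in> U" "Q = outer w" using fw[OF Q(1)] by blast
    then show "x \<in> U" using bk Q by simp
  qed
  show "\<And>Q. Q \<in> T \<Longrightarrow> outer ((s / norm (Q *v v0)) *\<^sub>R (Q *v v0)) = Q"
  proof -
    fix Q assume "Q \<in> T"
    then obtain w where "w \<in> U" "Q = outer w" using fw by blast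
    then show "outer ((s / norm (Q *v v0)) *\<^sub>R (Q *v v0)) = Q" using bk by simp
  qed
qed

lemma cov_outer: "covering_space (sphere (0::real^3) 1) outer (outer ` sphere 0 1)"
  unfolding covering_space_def
proof (intro conjI ballI)
  show "continuous_on (sphere 0 1) outer" by (rule cont_outer)
  show "outer ` sphere 0 1 = outer ` sphere 0 1" ..
  fix x assume "x \<in> outer ` sphere (0::real^3) 1"
  then obtain v0 where v0: "v0 \<in> sphere (0::real^3) 1" "x = outer v0" by blast
  define T where "T = {Q \<in> outer ` sphere 0 1. 0 < inner (Q *v v0) v0}"
  define U1 where "U1 = {w \<in> sphere (0::real^3) 1. 0 < 1 * inner w v0}"
  define U2 where "U2 = {w \<in> sphere (0::real^3) 1. 0 < (-1) * inner w v0}"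
  have v01: "inner v0 v0 = 1" using v0 norm_eq_1 by auto
  have "x \<in> T" unfolding T_def using v0 v01 by (auto simp: inner_outer)
  moreover have "openin (top_of_set (outer ` sphere 0 1)) T"
  proof -
    have "open {Q::real^3^3. 0 < inner (Q *v v0) v0}"
      by (intro open_Collect_less continuous_intros cont_mv)
    moreover have "T = outer ` sphere 0 1 \<inter> {Q. 0 < inner (Q *v v0) v0}" unfolding T_def by auto
    ultimately show ?thesis by (auto simp: openin_open)
  qed
  moreover have "\<Union>{U1, U2} = sphere 0 1 \<inter> outer -` T"
    unfolding T_def U1_def U2_def by (auto simp: inner_outer)
  moreover have "\<forall>u\<in>{U1, U2}. openin (top_of_set (sphere 0 1)) u"
  proof -
    have "open {w::real^3. 0 < 1 * inner w v0}" "open {w::real^3. 0 < (-1) * inner w v0}"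
      by (intro open_Collect_less continuous_intros)+
    moreover have "U1 = sphere 0 1 \<inter> {w. 0 < 1 * inner w v0}" "U2 = sphere 0 1 \<inter> {w. 0 < (-1) * inner w v0}"
      unfolding U1_def U2_def by auto
    ultimately show ?thesis by (auto simp: openin_open)
  qed
  moreover have "pairwise disjnt {U1, U2}"
    unfolding pairwise_def disjnt_def U1_def U2_def by auto
  moreover have "\<forall>u\<in>{U1, U2}. \<exists>q. homeomorphism u T outer q"
    using sheet[of 1 v0] sheet[of "-1" v0] unfolding T_def U1_def U2_def by auto
  ultimately show "\<exists>T. x \<in> T \<and> openin (top_of_set (outer ` sphere 0 1)) T \<and>
          (\<exists>v. \<Union> v = sphere 0 1 \<inter> outer -` T \<and> (\<forall>u\<in>v. openin (top_of_set (sphere 0 1)) u) \<and>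
               pairwise disjnt v \<and> (\<forall>u\<in>v. \<exists>q. homeomorphism u T outer q))"
    by blast
qed

definition trip :: "real list \<Rightarrow> real \<times> real \<times> real" where
  "trip l = (l!0, l!1, l!2)"

definition Pr :: "real^3^3 \<Rightarrow> real \<times> real \<times> real \<Rightarrow> bool" where
  "Pr A r \<longleftrightarrow> fst r \<le> fst (snd r) \<and> fst (snd r) \<le> snd (snd r) \<and>
     (\<forall>x. cp A x = (x - fst r) * (x - fst (snd r)) * (x - snd (snd r)))"

lemma Pr_iff:
  assumes sym: "transpose A = A"
  shows "Pr A r \<longleftrightarrow> r = trip (sorted_eigenvalues A)"
proof -
  obtain a b c where se: "sorted_eigenvalues A = [a,b,c]" "a \<le> b" "b \<le> c"
    and cpf: "\<forall>x. cp A x = (x-a)*(x-b)*(x-c)"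
    using se_char[OF sym] by blast
  show ?thesis
  proof
    assume P: "Pr A r"
    obtain r1 r2 r3 where r: "r = (r1, r2, r3)" by (cases r) auto
    have "r1 \<le> r2" "r2 \<le> r3" "\<And>x. (x-r1)*(x-r2)*(x-r3) = (x-a)*(x-b)*(x-c)"
      using P cpf unfolding Pr_def r by auto
    then have "r1 = a \<and> r2 = b \<and> r3 = c" using prod3_unique[of r1 r2 r3 a b c] se by blast
    then show "r = trip (sorted_eigenvalues A)" unfolding r se trip_def by simp
  next
    assume "r = trip (sorted_eigenvalues A)"
    then show "Pr A r" unfolding Pr_def se trip_def using se cpf by simp
  qed
qed

lemma norm_trip_sq:
  assumes sym: "transpose A = A"
  shows "(norm (trip (sorted_eigenvalues A)))^2 = (tr3 A)^2 - 2 * m3 A"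
proof -
  obtain a b c where se: "sorted_eigenvalues A = [a,b,c]"
    and cpf: "\<forall>x. cp A x = (x-a)*(x-b)*(x-c)"
    using se_char[OF sym] by blast
  have co: "tr3 A = a+b+c" "m3 A = a*b+a*c+b*c" using coeffs[OF cpf] by auto
  have "(norm (trip (sorted_eigenvalues A)))^2 = a^2 + b^2 + c^2"
    unfolding se trip_def by (simp add: norm_Pair)
  also have "\<dots> = (tr3 A)^2 - 2 * m3 A" unfolding co by (simp add: algebra_simps power2_eq_square)
  finally show ?thesis .
qed

lemma cont_eigs:
  fixes H :: "real^2 \<Rightarrow> real^3^3"
  assumes cont: "continuous_on UNIV H" and sym: "\<And>k. transpose (H k) = H k"
  shows "continuous_on UNIV (\<lambda>k. trip (sorted_eigenvalues (H k)))"
proof (rule continuous_at_imp_continuous_on, intro ballI)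
  fix k0 :: "real^2"
  let ?F = "\<lambda>k. trip (sorted_eigenvalues (H k))"
  let ?S = "cball k0 1"
  let ?g = "\<lambda>k. (tr3 (H k))^2 - 2 * m3 (H k)"
  have cg: "continuous_on UNIV ?g"
    unfolding tr3_def m3_def by (intro continuous_intros cont)
  have "compact (?g ` ?S)" by (intro compact_continuous_image continuous_on_subset[OF cg]) auto
  then have "bounded (?g ` ?S)" by (rule compact_imp_bounded)
  then obtain R where "\<forall>x\<in>?g ` ?S. norm x \<le> R" unfolding bounded_iff by blast
  then have R: "\<And>k. k \<in> ?S \<Longrightarrow> \<bar>?g k\<bar> \<le> R" by auto
  have FT: "?F \<in> ?S \<rightarrow> cball 0 (sqrt R)"
  proof
    fix k assume "k \<in> ?S"
    then have "(norm (?F k))^2 \<le> R" using R[of k] norm_trip_sq[OF sym[of k]] by simp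
    then have "norm (?F k) \<le> sqrt R" using real_le_rsqrt by blast
    then show "?F k \<in> cball 0 (sqrt R)" by simp
  qed
  have cHf: "continuous_on UNIV (\<lambda>z::(real^2) \<times> (real \<times> real \<times> real). H (fst z))"
    by (rule continuous_on_compose2[OF cont continuous_on_fst]) (auto intro: continuous_on_id)
  have eq: "(\<lambda>k. (k, ?F k)) ` ?S = {z. fst z \<in> ?S} \<inter> {z. Pr (H (fst z)) (snd z)}"
    using Pr_iff[OF sym] by force
  have "closed {z::(real^2) \<times> (real \<times> real \<times> real). Pr (H (fst z)) (snd z)}"
    unfolding Pr_def cp_def tr3_def m3_def det_3
    by (intro closed_Collect_conj closed_Collect_le closed_Collect_all closed_Collect_eq continuous_intros cHf)
  moreover have "closed {z::(real^2) \<times> (real \<times> real \<times> real). fst z \<in> ?S}"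
  proof -
    have "{z::(real^2) \<times> (real \<times> real \<times> real). fst z \<in> ?S} = ?S \<times> UNIV" by auto
    then show ?thesis by (simp add: closed_Times)
  qed
  ultimately have "closed ((\<lambda>k. (k, ?F k)) ` ?S)" unfolding eq by (intro closed_Int)
  then have "continuous_on ?S ?F"
    using continuous_from_closed_graph[OF compact_cball FT] by blast
  then show "isCont ?F k0"
    using continuous_on_interior[of ?S ?F k0] by simp
qed

lemma cont_adjm: "continuous_on S f \<Longrightarrow> continuous_on S (\<lambda>k. adjm (f k :: real^3^3))"
  unfolding adjm_def by (intro continuous_intros)

lemma cont_tr3: "continuous_on S f \<Longrightarrow> continuous_on S (\<lambda>k. tr3 (f k :: real^3^3))"
  unfolding tr3_def by (intro continuous_intros)

lemma tr3_outer: "tr3 (outer v) = inner v v"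
  by (simp add: tr3_def outer_def inner_vec_def sum_3)

theorem mainTheorem3:
  fixes H :: "real^2 \<Rightarrow> real^3^3" and i :: nat
  assumes cont: "continuous_on UNIV H"
    and per: "zlattice_periodic H"
    and sym: "\<And>k. transpose (H k) = H k"
    and inv: "\<And>k. H (- k) = H k"
    and i: "i \<in> {1, 2, 3}"
    and simple: "\<And>k. ith_eigenvalue_simple (H k) i"
  shows "\<exists>u :: real^2 \<Rightarrow> real^3. continuous_on UNIV u \<and> zlattice_periodic u \<and>
           (\<forall>k. norm (u k) = 1 \<and> H k *v u k = ith_eigenvalue (H k) i *\<^sub>R u k)"
proof -
  define e where "e k = ith_eigenvalue (H k) i" for k
  have ce: "continuous_on UNIV e"
  proof -
    have ct: "continuous_on UNIV (\<lambda>k. trip (sorted_eigenvalues (H k)))" by (rule cont_eigs[OF cont sym])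
    consider "i = 1" | "i = 2" | "i = 3" using i by auto
    then show ?thesis
    proof cases
      case 1
      then have "e = (\<lambda>k. fst (trip (sorted_eigenvalues (H k))))"
        by (simp add: fun_eq_iff e_def ith_eigenvalue_def trip_def)
      then show ?thesis using continuous_on_fst[OF ct] by simp
    next
      case 2
      then have "e = (\<lambda>k. fst (snd (trip (sorted_eigenvalues (H k)))))"
        by (simp add: fun_eq_iff e_def ith_eigenvalue_def trip_def)
      then show ?thesis using continuous_on_fst[OF continuous_on_snd[OF ct]] by simp
    next
      case 3
      then have "e = (\<lambda>k. snd (snd (trip (sorted_eigenvalues (H k)))))"
        by (simp add: fun_eq_iff e_def ith_eigenvalue_def trip_def)
      then show ?thesis using continuous_on_snd[OF continuous_on_snd[OF ct]] by simp
    qed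
  qed
  define Q where "Q k = proj (H k) i" for k
  have Qprops: "H k ** Q k = e k *\<^sub>R Q k" "\<exists>v. norm v = 1 \<and> outer v = Q k" for k
    using proj_props[OF sym i simple, of k] unfolding Q_def e_def by auto
  define M where "M k = e k *\<^sub>R mat 1 - H k" for k
  have Qeq: "Q k = (1 / tr3 (adjm (M k))) *\<^sub>R adjm (M k)" for k
    unfolding Q_def proj_def M_def e_def smat_scm ..
  have tnz: "tr3 (adjm (M k)) \<noteq> 0" for k
  proof
    assume "tr3 (adjm (M k)) = 0"
    then have "Q k = 0" unfolding Qeq by simp
    moreover obtain v where "norm v = 1" "outer v = Q k" using Qprops(2) by blast
    ultimately have "tr3 (outer v) = 0" "inner v v = 1" using norm_eq_1 by (auto simp: tr3_def)
    then show False by (simp add: tr3_outer)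
  qed
  have cM: "continuous_on UNIV M" unfolding M_def by (intro continuous_intros ce cont)
  have cQ: "continuous_on UNIV Q"
    unfolding Qeq[abs_def] by (intro continuous_intros cont_tr3 cont_adjm cM) (use tnz in auto)
  have Qim: "Q \<in> UNIV \<rightarrow> outer ` sphere 0 1"
  proof (rule Pi_I)
    fix k
    obtain v where "norm v = 1" "outer v = Q k" using Qprops(2)[of k] by blast
    then show "Q k \<in> outer ` sphere 0 1" by (metis image_eqI mem_sphere_0)
  qed
  obtain u where cu: "continuous_on UNIV u" and us: "u \<in> UNIV \<rightarrow> sphere 0 1"
      and uQ0: "\<And>k. k \<in> UNIV \<Longrightarrow> outer (u k) = Q k"
  proof (rule covering_space_lift[OF cov_outer convex_imp_simply_connected[OF convex_UNIV]
        open_imp_locally_path_connected[OF open_UNIV] cQ Qim])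
    fix g assume "continuous_on UNIV g" "g \<in> UNIV \<rightarrow> sphere 0 1" "\<And>y. y \<in> UNIV \<Longrightarrow> outer (g y) = Q y"
    then show thesis by (rule that)
  qed
  have uQ: "outer (u k) = Q k" for k using uQ0 by simp
  have un: "norm (u k) = 1" for k using us by auto
  have ueig: "H k *v u k = e k *\<^sub>R u k" for k
    using eig_from_proj[OF un[of k]] Qprops(1)[of k] uQ[of k] by simp
  have QH: "Q k1 = Q k2" if "H k1 = H k2" for k1 k2 unfolding Q_def using that by simp
  have const: "u (f k) = u k" if contf: "continuous_on UNIV f" and Hf: "\<And>k. H (f k) = H k"
      and base: "u (f k0) = u k0" for f k0 k
  proof -
    let ?g = "\<lambda>k. inner (u (f k)) (u k)"
    have pm: "u (f k) = u k \<or> u (f k) = - u k" for k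
      using outer_eq[OF un[of k] un[of "f k"]] uQ QH[OF Hf[of k]] by metis
    have gv: "?g k = 1 \<or> ?g k = -1" for k
    proof -
      have "inner (u k) (u k) = 1" using un norm_eq_1 by blast
      then show ?thesis using pm[of k] by auto
    qed
    have cg: "continuous_on UNIV ?g"
      by (intro continuous_intros cu continuous_on_compose2[OF cu contf]) auto
    have "finite (?g ` UNIV)"
      by (rule finite_subset[of _ "{1, -1}"]) (use gv in auto)
    then have "?g constant_on UNIV"
      by (rule continuous_finite_range_constant[OF connected_UNIV cg])
    then obtain c where c: "\<And>k. ?g k = c"
      unfolding constant_on_def by blast
    have "inner (u k0) (u k0) = 1" using un norm_eq_1 by blast
    then have "c = 1" using c[of k0] base by simp
    then have "?g k = 1" using c by simp
    moreover have "inner (u k) (u k) = 1" using un norm_eq_1 by blast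
    ultimately show ?thesis using pm[of k] by auto
  qed
  have ueven: "u (- k) = u k" for k
    using const[of uminus 0 k] inv by (simp add: continuous_on_minus continuous_on_id)
  have "zlattice_periodic u"
    unfolding zlattice_periodic_def
  proof (intro allI impI)
    fix k d :: "real^2"
    assume d: "\<forall>j. d $ j \<in> \<int>"
    have Hd: "H (x + d) = H x" for x using per d unfolding zlattice_periodic_def by blast
    let ?k0 = "- ((1/2) *\<^sub>R d)"
    have "?k0 + d = (1 - 1/2) *\<^sub>R d" by (simp only: scaleR_diff_left scaleR_one) simp
    also have "(1 - 1/2::real) = 1/2" by simp
    finally have kd: "?k0 + d = (1/2) *\<^sub>R d" .
    have e1: "u (?k0 + d) = u ((1/2) *\<^sub>R d)" by (simp only: kd)
    have e2: "u ?k0 = u ((1/2) *\<^sub>R d)" by (rule ueven)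
    have "u (?k0 + d) = u ?k0" by (simp only: e1 e2)
    then show "u (k + d) = u k"
      using const[of "\<lambda>x. x + d" ?k0 k] Hd by (simp add: continuous_intros)
  qed
  then show ?thesis using cu un ueig unfolding e_def by blast
qed

end
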